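(* Let $k$ be a field containing a primitive fourth root of unity $i$, and let $H_{\pm}(8)$ be the quasi-Hopf algebra described in the context, with dual basis $\{P_{g^ax^b}\mid 0\le a\le1,\ 0\le b\le 3\}$ of $H_\pm(8)^*$ corresponding to the basis $\{g^ax^b\}$. Then the space of left cointegrals on $H_{\pm}(8)$ is $kP_{x^3}$.
   Context: $H_{\pm}(8)$ is the unital algebra generated by $g,x$ with relations $g^2=1$, $x^4=0$, $gx=-xg$ (basis $g^ax^b$, $0\le a\le1$, $0\le b\le3$), with $\Delta(g)=g\otimes g$, $\varepsilon(g)=1$, $\Delta(x)=x\otimes(p_+\pm ip_-)+1\otimes p_+x+g\otimes p_-x$, $\varepsilon(x)=0$, where $p_\pm=\frac12(1\pm g)$; reassociator $\Phi=1\otimes1\otimes1-2p_-\otimes p_-\otimes p_-$, antipode $S(g)=g$, $S(x)=-x(p_+\pm ip_-)$, and $\alpha=g$, $\beta=1$. (Two quasi-Hopf algebras, one for each sign.) Its modular element $\mu$ satisfies $\mu(g)=-1$, $\mu(x)=0$. General definitions, for a finite dimensional quasi-Hopf algebra $(H,\Delta,\varepsilon,\Phi,S,\alpha,\beta)$ (axioms of Drinfeld: $(\mathrm{Id}\otimes\Delta)\Delta(h)=\Phi(\Delta\otimes\mathrm{Id})\Delta(h)\Phi^{-1}$, counit axioms, 3-cocycle condition for $\Phi$, $(\mathrm{Id}\otimes\varepsilon\otimes\mathrm{Id})(\Phi)=1\otimes1$, $S(h_1)\alpha h_2=\varepsilon(h)\alpha$, $h_1\beta S(h_2)=\varepsilon(h)\beta$,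 $X^1\beta S(X^2)\alpha X^3=1=S(x^1)\alpha x^2\beta S(x^3)$), with $\Delta(h)=h_1\otimes h_2$, $\Phi=X^1\otimes X^2\otimes X^3$, $\Phi^{-1}=x^1\otimes x^2\otimes x^3$: $\gamma=S(x^1X^2)\alpha x^2X^3_1\otimes S(X^1)\alpha x^3X^3_2$; $\delta=X^1_1x^1\beta S(X^3)\otimes X^1_2x^2\beta S(X^2x^3)$; $f=f^1\otimes f^2=(S\otimes S)(\Delta^{\rm op}(x^1))\gamma\Delta(x^2\beta S(x^3))$ with inverse $f^{-1}=g^1\otimes g^2=\Delta(S(x^1)\alpha x^2)\delta(S\otimes S)(\Delta^{\rm cop}(x^3))$; $p_R=p^1\otimes p^2=x^1\otimes x^2\beta S(x^3)$; $q_R=q^1\otimes q^2=X^1\otimes S^{-1}(\alpha X^3)X^2$; $U=g^1S(q^2)\otimes g^2S(q^1)$, $V=S^{-1}(f^2p^2)\otimes S^{-1}(f^1p^1)$. Left integrals: $ht=\varepsilon(h)t$ for all $h$. $\mu\in H^*$ is the algebra map with $th=\mu(h)t$ for left integrals $t$. A left cointegral is $\lambda\in H^*$ with $\lambda(V^2h_2U^2)V^1h_1U^1=\mu(x^1)\lambda(hS(x^2))x^3$ for all $h$. *)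

theory Defs
  imports Main "HOL-Library.Function_Algebras"
begin

text \<open>An element of H is its coefficient function on the basis g^a x^b, indexed by
  (a,b) in Bset = {0..1} x {0..3}, and vanishing outside Bset.
  Elements of H (x) H and H (x) H (x) H are coefficient functions on pairs / triples
  of basis indices. A functional l in H^* is given by its coordinates in the dual
  basis P_{g^a x^b}, i.e. l(h) = sum_p l p * h p.
  The parameter w stands for the element +i or -i (one quasi-Hopf algebra per sign).\<close>

type_synonym idx = "nat \<times> nat"
type_synonym 'k H1 = "idx \<Rightarrow> 'k"
type_synonym 'k H2 = "idx \<times> idx \<Rightarrow> 'k"
type_synonym 'k H3 = "idx \<times> idx \<times> idx \<Rightarrow> 'k"

definition Bset :: "idx set" where
  "Bset = {0..1} \<times> {0..3}"

definition Hel :: "('k::field) H1 set" where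
  "Hel = {h. \<forall>p. p \<notin> Bset \<longrightarrow> h p = 0}"

definition H3el :: "('k::field) H3 set" where
  "H3el = {t. \<forall>p q r. (p \<notin> Bset \<or> q \<notin> Bset \<or> r \<notin> Bset) \<longrightarrow> t (p, q, r) = 0}"

definition sc :: "'k::field \<Rightarrow> ('a \<Rightarrow> 'k) \<Rightarrow> ('a \<Rightarrow> 'k)" where
  "sc c f = (\<lambda>y. c * f y)"

text \<open>basis element g^a x^b, and also the dual basis element P_{g^a x^b}\<close>
definition bas :: "idx \<Rightarrow> ('k::field) H1" where
  "bas p = (\<lambda>q. if q = p then 1 else 0)"

text \<open>product of basis elements: g^a x^b g^c x^d = (-1)^(bc) g^(a+c) x^(b+d), x^4 = 0, g^2 = 1\<close>
definition bprod :: "idx \<Rightarrow> idx \<Rightarrow> ('k::field) H1" where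
  "bprod p q = (if snd p + snd q < 4
      then sc ((-1) ^ (snd p * fst q)) (bas ((fst p + fst q) mod 2, snd p + snd q))
      else 0)"

definition hmult :: "('k::field) H1 \<Rightarrow> 'k H1 \<Rightarrow> 'k H1" where
  "hmult u v = (\<Sum>p\<in>Bset. \<Sum>q\<in>Bset. sc (u p * v q) (bprod p q))"

definition hone :: "('k::field) H1" where "hone = bas (0,0)"
definition hg :: "('k::field) H1" where "hg = bas (1,0)"
definition hx :: "('k::field) H1" where "hx = bas (0,1)"

definition hprodl :: "('k::field) H1 list \<Rightarrow> 'k H1" where
  "hprodl xs = foldr hmult xs hone"

definition hpow :: "('k::field) H1 \<Rightarrow> nat \<Rightarrow> 'k H1" where
  "hpow u n = (hmult u ^^ n) hone"

definition pplus :: "('k::field) H1" where "pplus = sc (1/2) (hone + hg)"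
definition pminus :: "('k::field) H1" where "pminus = sc (1/2) (hone - hg)"

definition tens :: "('k::field) H1 \<Rightarrow> 'k H1 \<Rightarrow> 'k H2" where
  "tens u v = (\<lambda>(p, q). u p * v q)"

definition tens3 :: "('k::field) H1 \<Rightarrow> 'k H1 \<Rightarrow> 'k H1 \<Rightarrow> 'k H3" where
  "tens3 u v w = (\<lambda>(p, q, r). u p * v q * w r)"

definition hmult2 :: "('k::field) H2 \<Rightarrow> 'k H2 \<Rightarrow> 'k H2" where
  "hmult2 S T = (\<Sum>(p, q)\<in>Bset \<times> Bset. \<Sum>(p', q')\<in>Bset \<times> Bset.
      sc (S (p, q) * T (p', q')) (tens (bprod p p') (bprod q q')))"

definition hmult3 :: "('k::field) H3 \<Rightarrow> 'k H3 \<Rightarrow> 'k H3" where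
  "hmult3 S T = (\<Sum>(p, q, r)\<in>Bset \<times> Bset \<times> Bset. \<Sum>(p', q', r')\<in>Bset \<times> Bset \<times> Bset.
      sc (S (p, q, r) * T (p', q', r')) (tens3 (bprod p p') (bprod q q') (bprod r r')))"

definition hone2 :: "('k::field) H2" where "hone2 = tens hone hone"
definition hone3 :: "('k::field) H3" where "hone3 = tens3 hone hone hone"

definition hpow2 :: "('k::field) H2 \<Rightarrow> nat \<Rightarrow> 'k H2" where
  "hpow2 T n = (hmult2 T ^^ n) hone2"

text \<open>Sweedler-type sums: sum2 T F = T^1 ... T^2 (F bilinear), sum3 likewise\<close>
definition sum2 :: "('k::field) H2 \<Rightarrow> ('k H1 \<Rightarrow> 'k H1 \<Rightarrow> ('a \<Rightarrow> 'k)) \<Rightarrow> ('a \<Rightarrow> 'k)" where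
  "sum2 T F = (\<Sum>(p, q)\<in>Bset \<times> Bset. sc (T (p, q)) (F (bas p) (bas q)))"

definition sum3 :: "('k::field) H3 \<Rightarrow> ('k H1 \<Rightarrow> 'k H1 \<Rightarrow> 'k H1 \<Rightarrow> ('a \<Rightarrow> 'k)) \<Rightarrow> ('a \<Rightarrow> 'k)" where
  "sum3 T F = (\<Sum>(p, q, r)\<in>Bset \<times> Bset \<times> Bset. sc (T (p, q, r)) (F (bas p) (bas q) (bas r)))"

definition ev :: "('k::field) H1 \<Rightarrow> 'k H1 \<Rightarrow> 'k" where
  "ev l h = (\<Sum>p\<in>Bset. l p * h p)"

text \<open>comultiplication: algebra map determined by Delta(g), Delta(x)\<close>
definition Dg :: "('k::field) H2" where "Dg = tens hg hg"
definition Dx :: "('k::field) \<Rightarrow> 'k H2" where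
  "Dx w = tens hx (pplus + sc w pminus) + tens hone (hmult pplus hx) + tens hg (hmult pminus hx)"

definition Delta :: "('k::field) \<Rightarrow> 'k H1 \<Rightarrow> 'k H2" where
  "Delta w h = (\<Sum>p\<in>Bset. sc (h p) (hmult2 (hpow2 Dg (fst p)) (hpow2 (Dx w) (snd p))))"

definition counit :: "('k::field) H1 \<Rightarrow> 'k" where
  "counit h = h (0,0) + h (1,0)"

text \<open>antipode: anti-algebra map with S(g) = g, S(x) = -x(p_+ + w p_-)\<close>
definition Sx :: "('k::field) \<Rightarrow> 'k H1" where
  "Sx w = - hmult hx (pplus + sc w pminus)"

definition Santi :: "('k::field) \<Rightarrow> 'k H1 \<Rightarrow> 'k H1" where
  "Santi w h = (\<Sum>p\<in>Bset. sc (h p) (hmult (hpow (Sx w) (snd p)) (hpow hg (fst p))))"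

definition Sinv :: "('k::field) \<Rightarrow> 'k H1 \<Rightarrow> 'k H1" where
  "Sinv w h = (THE h'. h' \<in> Hel \<and> Santi w h' = h)"

definition halpha :: "('k::field) H1" where "halpha = hg"
definition hbeta :: "('k::field) H1" where "hbeta = hone"

definition Phi :: "('k::field) H3" where
  "Phi = hone3 - sc 2 (tens3 pminus pminus pminus)"

definition Phiinv :: "('k::field) H3" where
  "Phiinv = (THE y. y \<in> H3el \<and> hmult3 Phi y = hone3 \<and> hmult3 y Phi = hone3)"

definition gammaE :: "('k::field) \<Rightarrow> 'k H2" where
  "gammaE w = sum3 Phi (\<lambda>X1 X2 X3. sum3 Phiinv (\<lambda>x1 x2 x3. sum2 (Delta w X3) (\<lambda>y1 y2.
      tens (hprodl [Santi w (hmult x1 X2), halpha, x2, y1])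
           (hprodl [Santi w X1, halpha, x3, y2]))))"

definition deltaE :: "('k::field) \<Rightarrow> 'k H2" where
  "deltaE w = sum3 Phi (\<lambda>X1 X2 X3. sum3 Phiinv (\<lambda>x1 x2 x3. sum2 (Delta w X1) (\<lambda>y1 y2.
      tens (hprodl [y1, x1, hbeta, Santi w X3])
           (hprodl [y2, x2, hbeta, Santi w (hmult X2 x3)]))))"

definition SSDop :: "('k::field) \<Rightarrow> 'k H1 \<Rightarrow> 'k H2" where
  "SSDop w h = sum2 (Delta w h) (\<lambda>a b. tens (Santi w b) (Santi w a))"

definition fE :: "('k::field) \<Rightarrow> 'k H2" where
  "fE w = sum3 Phiinv (\<lambda>x1 x2 x3.
      hmult2 (hmult2 (SSDop w x1) (gammaE w)) (Delta w (hprodl [x2, hbeta, Santi w x3])))"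

definition finvE :: "('k::field) \<Rightarrow> 'k H2" where
  "finvE w = sum3 Phiinv (\<lambda>x1 x2 x3.
      hmult2 (hmult2 (Delta w (hprodl [Santi w x1, halpha, x2])) (deltaE w)) (SSDop w x3))"

definition pR :: "('k::field) \<Rightarrow> 'k H2" where
  "pR w = sum3 Phiinv (\<lambda>x1 x2 x3. tens x1 (hprodl [x2, hbeta, Santi w x3]))"

definition qR :: "('k::field) \<Rightarrow> 'k H2" where
  "qR w = sum3 Phi (\<lambda>X1 X2 X3. tens X1 (hmult (Sinv w (hmult halpha X3)) X2))"

definition UE :: "('k::field) \<Rightarrow> 'k H2" where
  "UE w = sum2 (finvE w) (\<lambda>g1 g2. sum2 (qR w) (\<lambda>q1 q2.
      tens (hmult g1 (Santi w q2)) (hmult g2 (Santi w q1))))"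

definition VE :: "('k::field) \<Rightarrow> 'k H2" where
  "VE w = sum2 (fE w) (\<lambda>f1 f2. sum2 (pR w) (\<lambda>p1 p2.
      tens (Sinv w (hmult f2 p2)) (Sinv w (hmult f1 p1))))"

text \<open>modular element: the algebra map with mu(g) = -1, mu(x) = 0 (as stated in the context),
  in dual-basis coordinates: mu = P_1 - P_g\<close>
definition mu :: "('k::field) H1" where
  "mu = bas (0,0) - bas (1,0)"

definition left_cointegral :: "('k::field) \<Rightarrow> 'k H1 \<Rightarrow> bool" where
  "left_cointegral w l \<longleftrightarrow> (\<forall>h\<in>Hel.
     sum2 (VE w) (\<lambda>v1 v2. sum2 (Delta w h) (\<lambda>h1 h2. sum2 (UE w) (\<lambda>u1 u2.
        sc (ev l (hprodl [v2, h2, u2])) (hprodl [v1, h1, u1]))))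
     = sum3 Phiinv (\<lambda>x1 x2 x3. sc (ev mu x1 * ev l (hmult h (Santi w x2))) x3))"

end

theory Submission
  imports Defs
begin

declare One_nat_def [simp del]

definition mk :: "'k::field \<Rightarrow> 'k \<Rightarrow> 'k \<Rightarrow> 'k \<Rightarrow> 'k \<Rightarrow> 'k \<Rightarrow> 'k \<Rightarrow> 'k \<Rightarrow> 'k H1" where
  "mk a0 a1 a2 a3 b0 b1 b2 b3 = (\<lambda>p. if p = (0,0) then a0 else if p = (0,1) then a1 else
     if p = (0,2) then a2 else if p = (0,3) then a3 else if p = (1,0) then b0 else if p = (1,1) then b1
     else if p = (1,2) then b2 else if p = (1,3) then b3 else 0)"

lemma Bset_eq: "Bset = {(0,0),(0,1),(0,2),(0,3),(1,0),(1,1),(1,2),(1,3)}"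
  unfolding Bset_def by auto

lemma sum_Bset: "(\<Sum>p\<in>Bset. f p) = f(0,0)+f(0,1)+f(0,2)+f(0,3)+f(1,0)+f(1,1)+f(1,2)+f(1,3)"
  by (simp add: Bset_eq add.assoc)

lemma finite_Bset [simp]: "finite Bset" by (simp add: Bset_def)

lemma sum_fun_apply: "finite A \<Longrightarrow> (sum F A) x = sum (\<lambda>a. F a x) A"
  by (induction A rule: finite_induct) auto

lemma mk_apply [simp]:
  "mk a0 a1 a2 a3 b0 b1 b2 b3 (0,0) = a0"
  "mk a0 a1 a2 a3 b0 b1 b2 b3 (0,1) = a1"
  "mk a0 a1 a2 a3 b0 b1 b2 b3 (0,2) = a2"
  "mk a0 a1 a2 a3 b0 b1 b2 b3 (0,3) = a3"
  "mk a0 a1 a2 a3 b0 b1 b2 b3 (1,0) = b0"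
  "mk a0 a1 a2 a3 b0 b1 b2 b3 (1,1) = b1"
  "mk a0 a1 a2 a3 b0 b1 b2 b3 (1,2) = b2"
  "mk a0 a1 a2 a3 b0 b1 b2 b3 (1,3) = b3"
  by (simp_all add: mk_def)

lemma Bset_cases: "p \<in> Bset \<Longrightarrow> p = (0,0) \<or> p = (0,1) \<or> p = (0,2) \<or> p = (0,3) \<or> p = (1,0) \<or> p = (1,1) \<or> p = (1,2) \<or> p = (1,3)"
  by (simp add: Bset_eq)

lemma HelD: "h \<in> Hel \<Longrightarrow> p \<notin> Bset \<Longrightarrow> h p = 0"
  unfolding Hel_def by blast
lemma HelI: "(\<And>p. p \<notin> Bset \<Longrightarrow> h p = 0) \<Longrightarrow> h \<in> Hel"
  unfolding Hel_def by blast

lemma Hel_add [simp]: "u \<in> Hel \<Longrightarrow> v \<in> Hel \<Longrightarrow> u + v \<in> Hel"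
  by (rule HelI) (simp add: HelD)
lemma Hel_diff [simp]: "u \<in> Hel \<Longrightarrow> v \<in> Hel \<Longrightarrow> u - v \<in> Hel"
  by (rule HelI) (simp add: HelD)
lemma Hel_uminus [simp]: "u \<in> Hel \<Longrightarrow> - u \<in> Hel"
  by (rule HelI) (simp add: HelD)
lemma Hel_sc [simp]: "u \<in> Hel \<Longrightarrow> sc c u \<in> Hel"
  by (rule HelI) (simp add: HelD sc_def)
lemma Hel_zero [simp]: "0 \<in> Hel"
  by (rule HelI) simp
lemma bas_Hel [simp]: "p \<in> Bset \<Longrightarrow> bas p \<in> Hel"
  by (rule HelI) (auto simp add: bas_def)

lemma sc_apply: "sc c f x = c * f x" by (simp add: sc_def)

lemma mk_out: "p \<notin> Bset \<Longrightarrow> mk a0 a1 a2 a3 b0 b1 b2 b3 p = 0"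
  unfolding mk_def Bset_eq by (simp only: insert_iff empty_iff de_Morgan_disj if_False)

lemma mk_Hel [simp]: "mk a0 a1 a2 a3 b0 b1 b2 b3 \<in> Hel"
  by (rule HelI, rule mk_out)

lemma H1_eqI: "f \<in> Hel \<Longrightarrow> g \<in> Hel \<Longrightarrow> f(0,0) = g(0,0) \<Longrightarrow> f(0,1) = g(0,1) \<Longrightarrow> f(0,2) = g(0,2) \<Longrightarrow> f(0,3) = g(0,3)
  \<Longrightarrow> f(1,0) = g(1,0) \<Longrightarrow> f(1,1) = g(1,1) \<Longrightarrow> f(1,2) = g(1,2) \<Longrightarrow> f(1,3) = g(1,3) \<Longrightarrow> f = g"
  apply (rule ext)
  subgoal for p
    apply (cases "p \<in> Bset")
    apply (drule Bset_cases, elim disjE; simp)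
    by (simp add: HelD)
  done

lemma Hel_mk: "h \<in> Hel \<Longrightarrow> h = mk (h(0,0)) (h(0,1)) (h(0,2)) (h(0,3)) (h(1,0)) (h(1,1)) (h(1,2)) (h(1,3))"
  by (rule H1_eqI) simp_all

lemma mk_eq_iff: "mk a0 a1 a2 a3 b0 b1 b2 b3 = mk c0 c1 c2 c3 d0 d1 d2 d3 \<longleftrightarrow>
   a0 = c0 \<and> a1 = c1 \<and> a2 = c2 \<and> a3 = c3 \<and> b0 = d0 \<and> b1 = d1 \<and> b2 = d2 \<and> b3 = d3"
  apply (rule iffI)
  apply (metis mk_apply)
  by simp

lemma mk_add [simp]: "mk a0 a1 a2 a3 b0 b1 b2 b3 + mk c0 c1 c2 c3 d0 d1 d2 d3 =
   mk (a0+c0) (a1+c1) (a2+c2) (a3+c3) (b0+d0) (b1+d1) (b2+d2) (b3+d3)"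
  by (rule H1_eqI) simp_all

lemma mk_diff [simp]: "mk a0 a1 a2 a3 b0 b1 b2 b3 - mk c0 c1 c2 c3 d0 d1 d2 d3 =
   mk (a0-c0) (a1-c1) (a2-c2) (a3-c3) (b0-d0) (b1-d1) (b2-d2) (b3-d3)"
  by (rule H1_eqI) simp_all

lemma mk_uminus [simp]: "- mk a0 a1 a2 a3 b0 b1 b2 b3 =
   mk (-a0) (-a1) (-a2) (-a3) (-b0) (-b1) (-b2) (-b3)"
  by (rule H1_eqI) simp_all

lemma mk_sc [simp]: "sc c (mk a0 a1 a2 a3 b0 b1 b2 b3) =
   mk (c*a0) (c*a1) (c*a2) (c*a3) (c*b0) (c*b1) (c*b2) (c*b3)"
  by (rule H1_eqI) (simp_all add: sc_apply)

lemma mk_zero: "(0::'k::field H1) = mk 0 0 0 0 0 0 0 0"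
  by (rule H1_eqI) (simp_all add: HelI)

lemma bas_apply: "bas p q = (if q = p then 1 else 0)"
  by (simp add: bas_def)

lemma bas_mk [simp]:
  "bas (0,0) = mk 1 0 0 0 0 0 0 0" "bas (0,1) = mk 0 1 0 0 0 0 0 0"
  "bas (0,2) = mk 0 0 1 0 0 0 0 0" "bas (0,3) = mk 0 0 0 1 0 0 0 0"
  "bas (1,0) = mk 0 0 0 0 1 0 0 0" "bas (1,1) = mk 0 0 0 0 0 1 0 0"
  "bas (1,2) = mk 0 0 0 0 0 0 1 0" "bas (1,3) = mk 0 0 0 0 0 0 0 1"
  by (rule H1_eqI; simp add: bas_apply Bset_eq)+

lemma hmult_apply: "hmult u v q = (\<Sum>p\<in>Bset. \<Sum>p'\<in>Bset. u p * v p' * bprod p p' q)"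
  unfolding hmult_def by (simp add: sum_fun_apply Bset_def sc_def)

lemma bprod_Hel: "bprod p q \<in> Hel"
  by (auto simp: Hel_def bprod_def sc_def bas_def Bset_def)

lemma hmult_Hel [simp]: "hmult u v \<in> Hel"
  by (rule HelI) (simp add: hmult_apply HelD[OF bprod_Hel])

lemma bprod_apply: "bprod p q r = (if snd p + snd q < 4 \<and> r = ((fst p + fst q) mod 2, snd p + snd q) then (-1) ^ (snd p * fst q) else 0)"
  by (simp add: bprod_def sc_apply bas_apply)

lemma hmult_mk: "hmult (mk a0 a1 a2 a3 b0 b1 b2 b3) (mk c0 c1 c2 c3 d0 d1 d2 d3) =
  mk (a0*c0 + b0*d0)
     (a0*c1 + a1*c0 + b0*d1 - b1*d0)
     (a0*c2 + a1*c1 + a2*c0 + b0*d2 - b1*d1 + b2*d0)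
     (a0*c3 + a1*c2 + a2*c1 + a3*c0 + b0*d3 - b1*d2 + b2*d1 - b3*d0)
     (a0*d0 + b0*c0)
     (a0*d1 - a1*d0 + b0*c1 + b1*c0)
     (a0*d2 - a1*d1 + a2*d0 + b0*c2 + b1*c1 + b2*c0)
     (a0*d3 - a1*d2 + a2*d1 - a3*d0 + b0*c3 + b1*c2 + b2*c1 + b3*c0)"
  by (rule H1_eqI) (simp_all add: hmult_apply sum_Bset bprod_apply)

lemma sc_add_left: "sc (a+b) X = sc a X + sc b X" by (rule ext) (simp add: sc_def distrib_right)
lemma sc_diff_left: "sc (a-b) X = sc a X - sc b X" by (rule ext) (simp add: sc_def left_diff_distrib)
lemma sc_add_right: "sc a (X+Y) = sc a X + sc a Y" by (rule ext) (simp add: sc_def distrib_left)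
lemma sc_diff_right: "sc a (X-Y) = sc a X - sc a Y" by (rule ext) (simp add: sc_def right_diff_distrib)
lemma sc_sc: "sc a (sc b X) = sc (a*b) X" by (rule ext) (simp add: sc_def)
lemma sc_0 [simp]: "sc 0 X = 0" by (rule ext) (simp add: sc_def)
lemma sc_1 [simp]: "sc 1 X = X" by (rule ext) (simp add: sc_def)
lemma sc_zero_right [simp]: "sc a 0 = 0" by (rule ext) (simp add: sc_def)
lemma sc_sum_right: "finite A \<Longrightarrow> sc a (\<Sum>x\<in>A. f x) = (\<Sum>x\<in>A. sc a (f x))"
  by (rule ext) (simp add: sum_fun_apply sc_apply sum_distrib_left)

section \<open>Sweedler sums\<close>

lemma sum2_add: "sum2 (S + T) F = sum2 S F + sum2 T F"
  by (simp add: sum2_def sc_add_left sum.distrib split_def)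
lemma sum2_diff: "sum2 (S - T) F = sum2 S F - sum2 T F"
  by (simp add: sum2_def sc_diff_left sum_subtractf split_def)
lemma sum2_sc: "sum2 (sc c T) F = sc c (sum2 T F)"
  by (simp add: sum2_def sc_sum_right sc_sc split_def sc_apply)
lemma sum3_add: "sum3 (S + T) F = sum3 S F + sum3 T F"
  by (simp add: sum3_def sc_add_left sum.distrib split_def)
lemma sum3_diff: "sum3 (S - T) F = sum3 S F - sum3 T F"
  by (simp add: sum3_def sc_diff_left sum_subtractf split_def)
lemma sum3_sc: "sum3 (sc c T) F = sc c (sum3 T F)"
  by (simp add: sum3_def sc_sum_right sc_sc split_def sc_apply)

lemma tens_apply [simp]: "tens u v (p,q) = u p * v q" by (simp add: tens_def)
lemma tens3_apply [simp]: "tens3 u v w (p,q,r) = u p * v q * w r" by (simp add: tens3_def)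

lemma sum2_basis: "p \<in> Bset \<Longrightarrow> q \<in> Bset \<Longrightarrow> sum2 (tens (bas p) (bas q)) F = F (bas p) (bas q)"
proof -
  assume pq: "p \<in> Bset" "q \<in> Bset"
  have "sum2 (tens (bas p) (bas q)) F = (\<Sum>x\<in>Bset \<times> Bset. if x = (p,q) then F (bas p) (bas q) else 0)"
    unfolding sum2_def by (rule sum.cong) (auto simp: bas_apply)
  also have "\<dots> = F (bas p) (bas q)" using pq by (simp add: sum.delta)
  finally show ?thesis .
qed

lemma sum3_basis: "p \<in> Bset \<Longrightarrow> q \<in> Bset \<Longrightarrow> r \<in> Bset \<Longrightarrow>
   sum3 (tens3 (bas p) (bas q) (bas r)) F = F (bas p) (bas q) (bas r)"
proof -
  assume pq: "p \<in> Bset" "q \<in> Bset" "r \<in> Bset"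
  have "sum3 (tens3 (bas p) (bas q) (bas r)) F = (\<Sum>x\<in>Bset \<times> Bset \<times> Bset. if x = (p,q,r) then F (bas p) (bas q) (bas r) else 0)"
    unfolding sum3_def by (rule sum.cong) (auto simp: bas_apply)
  also have "\<dots> = F (bas p) (bas q) (bas r)" using pq by (simp add: sum.delta)
  finally show ?thesis .
qed

abbreviation "E1 \<equiv> mk 1 0 0 0 0 0 0 0"
abbreviation "G1 \<equiv> mk 0 0 0 0 1 0 0 0"

lemma sum2_basisG [simp]:
  "sum2 (tens E1 E1) F = F E1 E1" "sum2 (tens E1 G1) F = F E1 G1"
  "sum2 (tens G1 E1) F = F G1 E1" "sum2 (tens G1 G1) F = F G1 G1"
  using sum2_basis[of "(0,0)" "(0,0)" F] sum2_basis[of "(0,0)" "(1,0)" F]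
    sum2_basis[of "(1,0)" "(0,0)" F] sum2_basis[of "(1,0)" "(1,0)" F]
  by (simp_all add: Bset_eq)

lemma sum3_basisG [simp]:
  "sum3 (tens3 E1 E1 E1) F = F E1 E1 E1" "sum3 (tens3 E1 E1 G1) F = F E1 E1 G1"
  "sum3 (tens3 E1 G1 E1) F = F E1 G1 E1" "sum3 (tens3 E1 G1 G1) F = F E1 G1 G1"
  "sum3 (tens3 G1 E1 E1) F = F G1 E1 E1" "sum3 (tens3 G1 E1 G1) F = F G1 E1 G1"
  "sum3 (tens3 G1 G1 E1) F = F G1 G1 E1" "sum3 (tens3 G1 G1 G1) F = F G1 G1 G1"
  using sum3_basis[of "(0,0)" "(0,0)" "(0,0)" F] sum3_basis[of "(0,0)" "(0,0)" "(1,0)" F]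
    sum3_basis[of "(0,0)" "(1,0)" "(0,0)" F] sum3_basis[of "(0,0)" "(1,0)" "(1,0)" F]
    sum3_basis[of "(1,0)" "(0,0)" "(0,0)" F] sum3_basis[of "(1,0)" "(0,0)" "(1,0)" F]
    sum3_basis[of "(1,0)" "(1,0)" "(0,0)" F] sum3_basis[of "(1,0)" "(1,0)" "(1,0)" F]
  by (simp_all add: Bset_eq)

lemma hmult2_apply: "hmult2 S T (x,y) = (\<Sum>(p,q)\<in>Bset \<times> Bset. \<Sum>(p',q')\<in>Bset \<times> Bset.
      S (p, q) * T (p', q') * (bprod p p' x * bprod q q' y))"
  unfolding hmult2_def by (simp add: sum_fun_apply Bset_def sc_apply split_def)

lemma hmult2_add_left: "hmult2 (S + S') T = hmult2 S T + hmult2 S' T"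
  by (rule ext, clarsimp simp: hmult2_apply distrib_right sum.distrib split_def)
lemma hmult2_add_right: "hmult2 S (T + T') = hmult2 S T + hmult2 S T'"
  by (rule ext, clarsimp simp: hmult2_apply distrib_left distrib_right sum.distrib split_def)
lemma hmult2_diff_left: "hmult2 (S - S') T = hmult2 S T - hmult2 S' T"
  by (rule ext, clarsimp simp: hmult2_apply left_diff_distrib sum_subtractf split_def)
lemma hmult2_diff_right: "hmult2 S (T - T') = hmult2 S T - hmult2 S T'"
  by (rule ext, clarsimp simp: hmult2_apply right_diff_distrib left_diff_distrib sum_subtractf split_def)
lemma hmult2_sc_left: "hmult2 (sc c S) T = sc c (hmult2 S T)"
  by (rule ext, clarsimp simp: hmult2_apply sc_apply sum_distrib_left split_def mult.assoc)
lemma hmult2_sc_right: "hmult2 S (sc c T) = sc c (hmult2 S T)"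
  by (rule ext, clarsimp simp: hmult2_apply sc_apply sum_distrib_left split_def mult_ac)

lemma hmult2_tens: "hmult2 (tens a b) (tens c d) = tens (hmult a c) (hmult b d)"
proof (rule ext, clarify)
  fix x y
  have "hmult2 (tens a b) (tens c d) (x,y) = (\<Sum>p\<in>Bset. \<Sum>q\<in>Bset. \<Sum>p'\<in>Bset. \<Sum>q'\<in>Bset.
      (a p * c p' * bprod p p' x) * (b q * d q' * bprod q q' y))"
    by (simp add: hmult2_apply sum.cartesian_product[symmetric] mult_ac)
  also have "\<dots> = hmult a c x * hmult b d y"
    by (simp add: hmult_apply sum_product)
  finally show "hmult2 (tens a b) (tens c d) (x,y) = tens (hmult a c) (hmult b d) (x,y)" by simp
qed


lemma hmult3_apply: "hmult3 S T (x,y,z) = (\<Sum>(p,q,r)\<in>Bset \<times> Bset \<times> Bset. \<Sum>(p',q',r')\<in>Bset \<times> Bset \<times> Bset.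
      S (p, q, r) * T (p', q', r') * (bprod p p' x * bprod q q' y * bprod r r' z))"
  unfolding hmult3_def by (simp add: sum_fun_apply Bset_def sc_apply split_def)

lemma hmult3_add_left: "hmult3 (S + S') T = hmult3 S T + hmult3 S' T"
  by (rule ext, clarsimp simp: hmult3_apply distrib_right sum.distrib split_def)
lemma hmult3_add_right: "hmult3 S (T + T') = hmult3 S T + hmult3 S T'"
  by (rule ext, clarsimp simp: hmult3_apply distrib_left distrib_right sum.distrib split_def)
lemma hmult3_diff_left: "hmult3 (S - S') T = hmult3 S T - hmult3 S' T"
  by (rule ext, clarsimp simp: hmult3_apply left_diff_distrib sum_subtractf split_def)
lemma hmult3_diff_right: "hmult3 S (T - T') = hmult3 S T - hmult3 S T'"
  by (rule ext, clarsimp simp: hmult3_apply right_diff_distrib left_diff_distrib sum_subtractf split_def)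
lemma hmult3_sc_left: "hmult3 (sc c S) T = sc c (hmult3 S T)"
  by (rule ext, clarsimp simp: hmult3_apply sc_apply sum_distrib_left split_def mult.assoc)
lemma hmult3_sc_right: "hmult3 S (sc c T) = sc c (hmult3 S T)"
  by (rule ext, clarsimp simp: hmult3_apply sc_apply sum_distrib_left split_def mult_ac)

lemma sum6_reorder: "(\<Sum>p\<in>A. \<Sum>q\<in>A. \<Sum>r\<in>A. \<Sum>p'\<in>A. \<Sum>q'\<in>A. \<Sum>r'\<in>A. f p q r p' q' r') =
   (\<Sum>p\<in>A. \<Sum>p'\<in>A. \<Sum>q\<in>A. \<Sum>q'\<in>A. \<Sum>r\<in>A. \<Sum>r'\<in>A. f p q r p' q' r')"
proof (rule sum.cong[OF refl])
  fix p
  have 1: "(\<Sum>q\<in>A. \<Sum>r\<in>A. \<Sum>p'\<in>A. \<Sum>q'\<in>A. \<Sum>r'\<in>A. f p q r p' q' r') =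
     (\<Sum>q\<in>A. \<Sum>p'\<in>A. \<Sum>r\<in>A. \<Sum>q'\<in>A. \<Sum>r'\<in>A. f p q r p' q' r')"
    by (rule sum.cong[OF refl], rule sum.swap)
  have 2: "\<dots> = (\<Sum>p'\<in>A. \<Sum>q\<in>A. \<Sum>r\<in>A. \<Sum>q'\<in>A. \<Sum>r'\<in>A. f p q r p' q' r')"
    by (rule sum.swap)
  have 3: "\<dots> = (\<Sum>p'\<in>A. \<Sum>q\<in>A. \<Sum>q'\<in>A. \<Sum>r\<in>A. \<Sum>r'\<in>A. f p q r p' q' r')"
    by (rule sum.cong[OF refl], rule sum.cong[OF refl], rule sum.swap)
  show "(\<Sum>q\<in>A. \<Sum>r\<in>A. \<Sum>p'\<in>A. \<Sum>q'\<in>A. \<Sum>r'\<in>A. f p q r p' q' r') =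
     (\<Sum>p'\<in>A. \<Sum>q\<in>A. \<Sum>q'\<in>A. \<Sum>r\<in>A. \<Sum>r'\<in>A. f p q r p' q' r')"
    using 1 2 3 by simp
qed

lemma hmult3_tens3: "hmult3 (tens3 a b c) (tens3 d e f) = tens3 (hmult a d) (hmult b e) (hmult c f)"
proof (rule ext, clarify)
  fix x y z
  have "hmult3 (tens3 a b c) (tens3 d e f) (x,y,z) = (\<Sum>p\<in>Bset. \<Sum>q\<in>Bset. \<Sum>r\<in>Bset. \<Sum>p'\<in>Bset. \<Sum>q'\<in>Bset. \<Sum>r'\<in>Bset.
      (a p * d p' * bprod p p' x) * ((b q * e q' * bprod q q' y) * (c r * f r' * bprod r r' z)))"
    by (simp add: hmult3_apply sum.cartesian_product[symmetric] mult_ac)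
  also have "\<dots> = (\<Sum>p\<in>Bset. \<Sum>p'\<in>Bset. \<Sum>q\<in>Bset. \<Sum>q'\<in>Bset. \<Sum>r\<in>Bset. \<Sum>r'\<in>Bset.
      (a p * d p' * bprod p p' x) * ((b q * e q' * bprod q q' y) * (c r * f r' * bprod r r' z)))"
    by (rule sum6_reorder)
  also have "\<dots> = hmult a d x * (hmult b e y * hmult c f z)"
    unfolding hmult_apply by (simp only: sum_distrib_right, simp only: sum_distrib_left)
  finally show "hmult3 (tens3 a b c) (tens3 d e f) (x,y,z) = tens3 (hmult a d) (hmult b e) (hmult c f) (x,y,z)" by (simp add: mult.assoc)
qed

lemma hpow_simps: "hpow u 0 = hone" "hpow u 1 = hmult u hone" "hpow u 2 = hmult u (hmult u hone)"
   "hpow u 3 = hmult u (hmult u (hmult u hone))"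
  by (simp_all add: hpow_def numeral_eq_Suc One_nat_def)
lemma hpow2_simps: "hpow2 u 0 = hone2" "hpow2 u 1 = hmult2 u hone2" "hpow2 u 2 = hmult2 u (hmult2 u hone2)"
   "hpow2 u 3 = hmult2 u (hmult2 u (hmult2 u hone2))"
  by (simp_all add: hpow2_def numeral_eq_Suc One_nat_def)

lemma consts_mk [simp]: "hone = E1" "hg = G1" "hx = mk 0 1 0 0 0 0 0 0"
  "pplus = mk (1/2) 0 0 0 (1/2) 0 0 0" "pminus = mk (1/2) 0 0 0 (-1/2) 0 0 0"
  by (simp_all add: hone_def hg_def hx_def pplus_def pminus_def)


definition salpha :: "'k::field \<Rightarrow> 'k" where "salpha w = - (1/2) - w/2"
definition sbeta :: "'k::field \<Rightarrow> 'k" where "sbeta w = 1/2 - w/2"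
definition sD :: "'k::field \<Rightarrow> 'k" where "sD w = salpha w * salpha w - sbeta w * sbeta w"

lemma Santi_mk: "Santi w (mk a0 a1 a2 a3 b0 b1 b2 b3) =
   mk a0 (a1 * salpha w - b1 * sbeta w) (a2 * sD w) (a3 * (salpha w * sD w) - b3 * (sbeta w * sD w))
      b0 (a1 * sbeta w - b1 * salpha w) (b2 * sD w) (a3 * (sbeta w * sD w) - b3 * (salpha w * sD w))"
  apply (rule H1_eqI)
  apply simp_all
  apply (simp_all add: Santi_def sum_Bset hpow_simps hmult_mk Sx_def)
  apply (simp_all add: salpha_def sbeta_def sD_def algebra_simps)
  done



section \<open>group-algebra tensors\<close>

definition gt2 :: "'k::field \<Rightarrow> 'k \<Rightarrow> 'k \<Rightarrow> 'k \<Rightarrow> 'k H2" where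
  "gt2 a b c d = sc a (tens E1 E1) + sc b (tens E1 G1) + sc c (tens G1 E1) + sc d (tens G1 G1)"

definition gt3 :: "'k::field \<Rightarrow> 'k \<Rightarrow> 'k \<Rightarrow> 'k \<Rightarrow> 'k \<Rightarrow> 'k \<Rightarrow> 'k \<Rightarrow> 'k \<Rightarrow> 'k H3" where
  "gt3 a b c d e f g h = sc a (tens3 E1 E1 E1) + sc b (tens3 E1 E1 G1) + sc c (tens3 E1 G1 E1) + sc d (tens3 E1 G1 G1)
     + sc e (tens3 G1 E1 E1) + sc f (tens3 G1 E1 G1) + sc g (tens3 G1 G1 E1) + sc h (tens3 G1 G1 G1)"

lemma gmk_apply: "mk a 0 0 0 b 0 0 0 x = (if x = (0,0) then a else if x = (1,0) then b else 0)"
  by (cases "x \<in> Bset") (auto simp: mk_out Bset_eq)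

lemma gt2_apply: "gt2 a b c d (x,y) = (if x = (0,0) then (if y = (0,0) then a else if y = (1,0) then b else 0)
   else if x = (1,0) then (if y = (0,0) then c else if y = (1,0) then d else 0) else 0)"
  by (simp add: gt2_def sc_apply gmk_apply)

lemma gt3_apply: "gt3 a b c d e f g h (x,y,z) = (if x = (0,0) then
     (if y = (0,0) then (if z = (0,0) then a else if z = (1,0) then b else 0)
      else if y = (1,0) then (if z = (0,0) then c else if z = (1,0) then d else 0) else 0)
   else if x = (1,0) then
     (if y = (0,0) then (if z = (0,0) then e else if z = (1,0) then f else 0)
      else if y = (1,0) then (if z = (0,0) then g else if z = (1,0) then h else 0) else 0)
   else 0)"
  by (simp add: gt3_def sc_apply gmk_apply)

lemma gt2_eq_iff: "gt2 a b c d = gt2 a' b' c' d' \<longleftrightarrow> a = a' \<and> b = b' \<and> c = c' \<and> d = d'"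
  apply (rule iffI)
  apply (metis gt2_apply zero_neq_one prod.inject)
  by simp

lemma gt3_eq_iff: "gt3 a b c d e f g h = gt3 a' b' c' d' e' f' g' h' \<longleftrightarrow>
   a = a' \<and> b = b' \<and> c = c' \<and> d = d' \<and> e = e' \<and> f = f' \<and> g = g' \<and> h = h'"
  apply (rule iffI)
  apply (metis gt3_apply zero_neq_one prod.inject)
  by simp

lemma tens_g [simp]: "tens (mk a 0 0 0 b 0 0 0) (mk c 0 0 0 d 0 0 0) = gt2 (a*c) (a*d) (b*c) (b*d)"
  by (rule ext, clarify) (simp add: gt2_apply gmk_apply)

lemma tens3_g [simp]: "tens3 (mk a 0 0 0 b 0 0 0) (mk c 0 0 0 d 0 0 0) (mk e 0 0 0 f 0 0 0) =
   gt3 (a*c*e) (a*c*f) (a*d*e) (a*d*f) (b*c*e) (b*c*f) (b*d*e) (b*d*f)"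
  by (rule ext, clarify) (simp add: gt3_apply gmk_apply)

lemma gt2_add [simp]: "gt2 a b c d + gt2 a' b' c' d' = gt2 (a+a') (b+b') (c+c') (d+d')"
  by (rule ext, clarify) (simp add: gt2_apply)
lemma gt2_diff [simp]: "gt2 a b c d - gt2 a' b' c' d' = gt2 (a-a') (b-b') (c-c') (d-d')"
  by (rule ext, clarify) (simp add: gt2_apply)
lemma gt2_sc [simp]: "sc k (gt2 a b c d) = gt2 (k*a) (k*b) (k*c) (k*d)"
  by (rule ext, clarify) (simp add: gt2_apply sc_apply)
lemma gt2_zero: "(0::'k::field H2) = gt2 0 0 0 0"
  by (rule ext, clarify) (simp add: gt2_apply)
lemma gt3_add [simp]: "gt3 a b c d e f g h + gt3 a' b' c' d' e' f' g' h' =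
   gt3 (a+a') (b+b') (c+c') (d+d') (e+e') (f+f') (g+g') (h+h')"
  by (rule ext, clarify) (simp add: gt3_apply)
lemma gt3_diff [simp]: "gt3 a b c d e f g h - gt3 a' b' c' d' e' f' g' h' =
   gt3 (a-a') (b-b') (c-c') (d-d') (e-e') (f-f') (g-g') (h-h')"
  by (rule ext, clarify) (simp add: gt3_apply)
lemma gt3_sc [simp]: "sc k (gt3 a b c d e f g h) = gt3 (k*a) (k*b) (k*c) (k*d) (k*e) (k*f) (k*g) (k*h)"
  by (rule ext, clarify) (simp add: gt3_apply sc_apply)

lemma scz: "sc c X = (if c = 0 then 0 else sc c X)" by simp

lemma sum2_gt2 [simp]: "sum2 (gt2 a b c d) F = (if a = 0 then 0 else sc a (F E1 E1)) + (if b = 0 then 0 else sc b (F E1 G1))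
   + (if c = 0 then 0 else sc c (F G1 E1)) + (if d = 0 then 0 else sc d (F G1 G1))"
  unfolding gt2_def by (simp only: sum2_add sum2_sc sum2_basisG flip: scz)

lemma sum3_gt3 [simp]: "sum3 (gt3 a b c d e f g h) F =
     (if a = 0 then 0 else sc a (F E1 E1 E1)) + (if b = 0 then 0 else sc b (F E1 E1 G1))
   + (if c = 0 then 0 else sc c (F E1 G1 E1)) + (if d = 0 then 0 else sc d (F E1 G1 G1))
   + (if e = 0 then 0 else sc e (F G1 E1 E1)) + (if f = 0 then 0 else sc f (F G1 E1 G1))
   + (if g = 0 then 0 else sc g (F G1 G1 E1)) + (if h = 0 then 0 else sc h (F G1 G1 G1))"
  unfolding gt3_def by (simp only: sum3_add sum3_sc sum3_basisG flip: scz)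

lemma hmult2_gt2 [simp]: "hmult2 (gt2 a b c d) (gt2 a' b' c' d') =
  gt2 (a*a' + b*b' + c*c' + d*d') (a*b' + b*a' + c*d' + d*c') (a*c' + c*a' + b*d' + d*b') (a*d' + d*a' + b*c' + c*b')"
  unfolding gt2_def
  apply (simp only: hmult2_add_left hmult2_add_right hmult2_sc_left hmult2_sc_right hmult2_tens hmult_mk)
  apply (simp del: gt2_def add: gt2_eq_iff)
  done

lemma hmult3_gt3: "hmult3 (gt3 a b c d e f g h) (gt3 a' b' c' d' e' f' g' h') = gt3
  (a*a' + b*b' + c*c' + d*d' + e*e' + f*f' + g*g' + h*h')
  (a*b' + b*a' + c*d' + d*c' + e*f' + f*e' + g*h' + h*g')
  (a*c' + c*a' + b*d' + d*b' + e*g' + g*e' + f*h' + h*f')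
  (a*d' + d*a' + b*c' + c*b' + e*h' + h*e' + f*g' + g*f')
  (a*e' + e*a' + b*f' + f*b' + c*g' + g*c' + d*h' + h*d')
  (a*f' + f*a' + b*e' + e*b' + c*h' + h*c' + d*g' + g*d')
  (a*g' + g*a' + b*h' + h*b' + c*e' + e*c' + d*f' + f*d')
  (a*h' + h*a' + b*g' + g*b' + c*f' + f*c' + d*e' + e*d')"
  unfolding gt3_def
  apply (simp only: hmult3_add_left hmult3_add_right hmult3_sc_left hmult3_sc_right hmult3_tens3 hmult_mk)
  apply (simp add: gt3_eq_iff)
  done




lemma sum3_gt3' [simp]: "sum3 (gt3 a b c d e f g h) F =
     sc a (F E1 E1 E1) + sc b (F E1 E1 G1) + sc c (F E1 G1 E1) + sc d (F E1 G1 G1)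
   + sc e (F G1 E1 E1) + sc f (F G1 E1 G1) + sc g (F G1 G1 E1) + sc h (F G1 G1 G1)"
  unfolding gt3_def by (simp only: sum3_add sum3_sc sum3_basisG)
declare sum3_gt3 [simp del]

lemma hprodl4 [simp]: "hprodl [a,b,c,d] = hmult a (hmult b (hmult c (hmult d hone)))"
  by (simp add: hprodl_def)
lemma hprodl3 [simp]: "hprodl [a,b,c] = hmult a (hmult b (hmult c hone))"
  by (simp add: hprodl_def)

lemma Delta_bas: "p \<in> Bset \<Longrightarrow> Delta w (bas p) = hmult2 (hpow2 Dg (fst p)) (hpow2 (Dx w) (snd p))"
proof -
  assume p: "p \<in> Bset"
  have "Delta w (bas p) = (\<Sum>q\<in>Bset. if q = p then hmult2 (hpow2 Dg (fst p)) (hpow2 (Dx w) (snd p)) else 0)"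
    unfolding Delta_def by (rule sum.cong) (auto simp: bas_apply)
  then show ?thesis using p by (simp add: sum.delta)
qed

lemma Delta_E [simp]: "Delta w E1 = gt2 1 0 0 0"
  using Delta_bas[of "(0,0)" w] by (simp add: Bset_eq hpow2_simps hone2_def)
lemma Delta_G [simp]: "Delta w G1 = gt2 0 0 0 1"
  using Delta_bas[of "(1,0)" w] by (simp add: Bset_eq hpow2_simps hone2_def Dg_def)

lemma gt2_num [simp]: "numeral k * gt2 a b c d = gt2 (numeral k * a) (numeral k * b) (numeral k * c) (numeral k * d)"
  by (rule ext, clarify) (simp add: gt2_apply)
lemma gt3_num [simp]: "numeral k * gt3 a b c d e f g h = gt3 (numeral k * a) (numeral k * b) (numeral k * c) (numeral k * d)
   (numeral k * e) (numeral k * f) (numeral k * g) (numeral k * h)"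
  by (rule ext, clarify) (simp add: gt3_apply)
lemma mk_num [simp]: "numeral k * mk a0 a1 a2 a3 b0 b1 b2 b3 = mk (numeral k * a0) (numeral k * a1) (numeral k * a2) (numeral k * a3)
   (numeral k * b0) (numeral k * b1) (numeral k * b2) (numeral k * b3)"
  by (rule H1_eqI) (simp_all add: HelI mk_out)

lemma Delta_lin: "Delta w h = (\<Sum>p\<in>Bset. sc (h p) (Delta w (bas p)))"
  unfolding Delta_def[of w h] by (rule sum.cong) (simp_all add: Delta_bas)

lemma Delta_g [simp]: "Delta w (mk a 0 0 0 b 0 0 0) = gt2 a 0 0 b"
  by (subst Delta_lin) (simp add: sum_Bset)

context
  fixes w :: "'k::field"
  assumes two: "(2::'k) \<noteq> 0" and ww: "w * w = -1"
begin

lemma wnz [simp]: "w \<noteq> 0" using ww by auto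
lemma two' [simp]: "(2::'k) \<noteq> 0" by (rule two)
lemma nzm: "(a::'k) \<noteq> 0 \<Longrightarrow> b \<noteq> 0 \<Longrightarrow> a * b \<noteq> 0" by simp
lemma bit0_nz [simp]: "(numeral n::'k) \<noteq> 0 \<Longrightarrow> (numeral (Num.Bit0 n)::'k) \<noteq> 0"
proof -
  assume n: "(numeral n::'k) \<noteq> 0"
  have "(numeral (Num.Bit0 n)::'k) = 2 * numeral n" by (metis mult_2 numeral_Bit0)
  then show ?thesis using nzm[OF two n] by metis
qed

lemma sD_w: "sD w = w"
  unfolding sD_def salpha_def sbeta_def by (simp add: field_simps)

lemma Santi_g [simp]: "Santi w (mk a 0 0 0 b 0 0 0) = mk a 0 0 0 b 0 0 0"
  by (simp add: Santi_mk)

lemma inj2: "(x::'k) * al - y * be = x' * al - y' * be \<Longrightarrow> x * be - y * al = x' * be - y' * al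
   \<Longrightarrow> al * al - be * be \<noteq> 0 \<Longrightarrow> x = x' \<and> y = y'"
proof -
  assume 1: "x * al - y * be = x' * al - y' * be" and 2: "x * be - y * al = x' * be - y' * al"
    and d: "al * al - be * be \<noteq> 0"
  have "(x - x') * (al * al - be * be) = al * (x * al - y * be - (x' * al - y' * be)) - be * (x * be - y * al - (x' * be - y' * al))"
    by (simp add: algebra_simps)
  also have "\<dots> = 0" using 1 2 by simp
  finally have a: "x = x'" using d by simp
  have "(y - y') * (al * al - be * be) = be * (x * al - y * be - (x' * al - y' * be)) - al * (x * be - y * al - (x' * be - y' * al))"
    by (simp add: algebra_simps)
  also have "\<dots> = 0" using 1 2 by simp
  finally have b: "y = y'" using d by simp
  show ?thesis using a b by simp
qed

lemma Santi_inj: "h \<in> Hel \<Longrightarrow> h' \<in> Hel \<Longrightarrow> Santi w h = Santi w h' \<Longrightarrow> h = h'"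
proof -
  assume h: "h \<in> Hel" and h': "h' \<in> Hel" and e: "Santi w h = Santi w h'"
  have D: "sD w \<noteq> 0" by (simp add: sD_w)
  have D1: "salpha w * salpha w - sbeta w * sbeta w \<noteq> 0" using D by (simp add: sD_def)
  have D3: "(salpha w * sD w) * (salpha w * sD w) - (sbeta w * sD w) * (sbeta w * sD w) \<noteq> 0"
  proof -
    have "(salpha w * sD w) * (salpha w * sD w) - (sbeta w * sD w) * (sbeta w * sD w) = sD w * sD w * sD w"
      by (simp add: sD_def algebra_simps)
    then show ?thesis using D by simp
  qed
  from e have e': "Santi w (mk (h(0,0)) (h(0,1)) (h(0,2)) (h(0,3)) (h(1,0)) (h(1,1)) (h(1,2)) (h(1,3))) =
    Santi w (mk (h'(0,0)) (h'(0,1)) (h'(0,2)) (h'(0,3)) (h'(1,0)) (h'(1,1)) (h'(1,2)) (h'(1,3)))"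
    using Hel_mk[OF h] Hel_mk[OF h'] by simp
  then have eqs: "h(0,0) = h'(0,0)" "h(1,0) = h'(1,0)" "h(0,2) * sD w = h'(0,2) * sD w" "h(1,2) * sD w = h'(1,2) * sD w"
    "h (0,1) * salpha w - h (1,1) * sbeta w = h' (0,1) * salpha w - h' (1,1) * sbeta w"
    "h (0,1) * sbeta w - h (1,1) * salpha w = h' (0,1) * sbeta w - h' (1,1) * salpha w"
    "h (0,3) * (salpha w * sD w) - h (1,3) * (sbeta w * sD w) = h' (0,3) * (salpha w * sD w) - h' (1,3) * (sbeta w * sD w)"
    "h (0,3) * (sbeta w * sD w) - h (1,3) * (salpha w * sD w) = h' (0,3) * (sbeta w * sD w) - h' (1,3) * (salpha w * sD w)"
    unfolding Santi_mk mk_eq_iff by simp_all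
  have a: "h(0,2) = h'(0,2)" "h(1,2) = h'(1,2)" using eqs(3,4) D by simp_all
  have b: "h(0,1) = h'(0,1) \<and> h(1,1) = h'(1,1)" by (rule inj2[OF eqs(5,6) D1])
  have c: "h(0,3) = h'(0,3) \<and> h(1,3) = h'(1,3)" by (rule inj2[OF eqs(7,8) D3])
  show "h = h'" using h h' eqs(1,2) a b c by (intro H1_eqI) simp_all
qed

lemma Sinv_g [simp]: "Sinv w (mk a 0 0 0 b 0 0 0) = mk a 0 0 0 b 0 0 0"
  unfolding Sinv_def
  by (rule the_equality) (auto intro: Santi_inj[where h' = "mk a 0 0 0 b 0 0 0"])

lemma Phi_gt3: "(Phi::'k H3) = gt3 (3/4) (1/4) (1/4) (-1/4) (1/4) (-1/4) (-1/4) (1/4)"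
  by (simp add: Phi_def hone3_def gt3_eq_iff)

lemma hmult_E1_left [simp]: "u \<in> Hel \<Longrightarrow> hmult E1 u = u"
  by (subst (1 2) Hel_mk[of u], assumption+) (simp add: hmult_mk)
lemma hmult_E1_right [simp]: "u \<in> Hel \<Longrightarrow> hmult u E1 = u"
  by (subst (1 2) Hel_mk[of u], assumption+) (simp add: hmult_mk)

lemma H3elD: "y \<in> H3el \<Longrightarrow> (p \<notin> Bset \<or> q \<notin> Bset \<or> r \<notin> Bset) \<Longrightarrow> y (p,q,r) = 0"
  unfolding H3el_def by blast

lemma sum3_cong: "(\<And>p q r. p \<in> Bset \<Longrightarrow> q \<in> Bset \<Longrightarrow> r \<in> Bset \<Longrightarrow> F (bas p) (bas q) (bas r) = G (bas p) (bas q) (bas r))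
   \<Longrightarrow> sum3 T F = sum3 T G"
  unfolding sum3_def by (rule sum.cong) auto

lemma H3_decomp: "y \<in> H3el \<Longrightarrow> sum3 y (\<lambda>p q r. tens3 p q r) = y"
proof (rule ext, clarify)
  fix x1 x2 x3 assume y: "y \<in> H3el"
  have "sum3 y (\<lambda>p q r. tens3 p q r) (x1,x2,x3) =
     (\<Sum>P\<in>Bset \<times> Bset \<times> Bset. if P = (x1,x2,x3) then y (x1,x2,x3) else 0)"
    unfolding sum3_def
    apply (subst sum_fun_apply, simp)
    apply (rule sum.cong, rule refl)
    apply (auto simp: sc_apply bas_apply split: prod.splits)
    done
  also have "\<dots> = y (x1,x2,x3)"
    using y by (auto simp: sum.delta H3elD)
  finally show "sum3 y (\<lambda>p q r. tens3 p q r) (x1,x2,x3) = y (x1,x2,x3)" .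
qed

lemma hmult3_zero_right: "hmult3 S 0 = 0"
  by (rule ext, clarify) (simp add: hmult3_apply)

lemma hmult3_sum_right: "finite A \<Longrightarrow> hmult3 S (\<Sum>x\<in>A. f x) = (\<Sum>x\<in>A. hmult3 S (f x))"
proof (induction A rule: finite_induct)
  case empty then show ?case by (simp only: sum.empty hmult3_zero_right)
next
  case (insert x F) then show ?case by (simp only: sum.insert[OF insert(1,2)] hmult3_add_right insert(3))
qed

lemma hmult3_sum3_right: "hmult3 S (sum3 y F) = sum3 y (\<lambda>p q r. hmult3 S (F p q r))"
  unfolding sum3_def by (simp add: hmult3_sum_right split_def hmult3_sc_right)

lemma hmult3_tens3_left: "y \<in> H3el \<Longrightarrow> hmult3 (tens3 a b c) y = sum3 y (\<lambda>p q r. tens3 (hmult a p) (hmult b q) (hmult c r))"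
proof -
  assume y: "y \<in> H3el"
  have "hmult3 (tens3 a b c) y = hmult3 (tens3 a b c) (sum3 y (\<lambda>p q r. tens3 p q r))"
    using H3_decomp[OF y] by simp
  also have "\<dots> = sum3 y (\<lambda>p q r. tens3 (hmult a p) (hmult b q) (hmult c r))"
    by (simp add: hmult3_sum3_right hmult3_tens3)
  finally show ?thesis .
qed

lemma pm_idem: "(u::'k H1) \<in> Hel \<Longrightarrow> hmult pminus (hmult pminus u) = hmult pminus u"
  by (subst (1 2) Hel_mk[of u], assumption+) (simp add: hmult_mk mk_eq_iff field_simps)

lemma H3el_gt3: "gt3 a b c d e f g h \<in> H3el"
  unfolding H3el_def by (auto simp: gt3_apply Bset_eq)

lemma Phiinv_eq: "(Phiinv::'k H3) = Phi"
proof -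
  define E :: "'k H3" where "E = tens3 pminus pminus pminus"
  have PhiE: "Phi = hone3 - sc 2 E" unfolding Phi_def E_def ..
  have PP: "hmult3 (Phi::'k H3) Phi = hone3"
    unfolding Phi_gt3 by (simp add: hmult3_gt3 hone3_def gt3_eq_iff field_simps)
  have Pel: "(Phi::'k H3) \<in> H3el" by (simp add: Phi_gt3 H3el_gt3)
  have uniq: "y = Phi" if y: "(y::'k H3) \<in> H3el" and py: "hmult3 Phi y = hone3" for y
  proof -
    have a: "hmult3 hone3 y = y"
      unfolding hone3_def hmult3_tens3_left[OF y]
      by (subst H3_decomp[OF y, symmetric], rule sum3_cong) simp
    have K: "hmult3 E y = sum3 y (\<lambda>p q r. tens3 (hmult pminus p) (hmult pminus q) (hmult pminus r))"
      unfolding E_def by (rule hmult3_tens3_left[OF y])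
    have b: "hmult3 E (hmult3 E y) = hmult3 E y"
      unfolding K
      apply (simp only: hmult3_sum3_right E_def hmult3_tens3)
      apply (rule sum3_cong)
      apply (simp only: pm_idem bas_Hel)
      done
    have c: "hmult3 E hone3 = E"
      unfolding E_def hone3_def by (simp add: hmult3_gt3)
    have 1: "y - sc 2 (hmult3 E y) = hone3"
      using py a by (simp add: PhiE hmult3_diff_left hmult3_sc_left)
    have 2: "hmult3 E y - sc 2 (hmult3 E y) = E"
    proof -
      have "hmult3 E (y - sc 2 (hmult3 E y)) = hmult3 E hone3" using 1 by simp
      then show ?thesis by (simp add: hmult3_diff_right hmult3_sc_right b c)
    qed
    show "y = Phi"
    proof (rule ext)
      fix P
      have y1: "y P - 2 * hmult3 E y P = hone3 P" using fun_cong[OF 1, of P] by (simp add: sc_apply)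
      have "hmult3 E y P - 2 * hmult3 E y P = E P" using fun_cong[OF 2, of P] by (simp add: sc_apply)
      then have "- hmult3 E y P = E P" by (simp add: algebra_simps)
      then have k: "hmult3 E y P = - E P" by (metis minus_minus)
      have "y P = hone3 P + 2 * hmult3 E y P" using y1 by (simp add: algebra_simps)
      then show "y P = Phi P" by (simp add: PhiE sc_apply k)
    qed
  qed
  show ?thesis
    unfolding Phiinv_def
    by (rule the_equality) (use PP Pel uniq in auto)
qed

lemma gammaE_eq: "gammaE w = gt2 (-1/2) (1/2) (1/2) (1/2)"
  unfolding gammaE_def Phiinv_eq Phi_gt3
  apply (simp add: hmult_mk halpha_def hbeta_def)
  apply (simp add: gt2_eq_iff field_simps)
  done

lemma deltaE_eq: "deltaE w = gt2 (1/2) (1/2) (1/2) (-1/2)"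
  unfolding deltaE_def Phiinv_eq Phi_gt3
  apply (simp add: hmult_mk halpha_def hbeta_def)
  apply (simp add: gt2_eq_iff field_simps)
  done

lemma fE_eq: "fE w = gt2 (1/2) (1/2) (1/2) (-1/2)"
  unfolding fE_def Phiinv_eq Phi_gt3 SSDop_def gammaE_eq
  apply (simp add: hmult_mk halpha_def hbeta_def)
  apply (simp add: gt2_eq_iff field_simps)
  done

lemma finvE_eq: "finvE w = gt2 (1/2) (1/2) (1/2) (-1/2)"
  unfolding finvE_def Phiinv_eq Phi_gt3 SSDop_def deltaE_eq
  apply (simp add: hmult_mk halpha_def hbeta_def)
  apply (simp add: gt2_eq_iff field_simps)
  done

lemma pR_eq: "pR w = gt2 (1/2) (1/2) (1/2) (-1/2)"
  unfolding pR_def Phiinv_eq Phi_gt3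
  apply (simp add: hmult_mk halpha_def hbeta_def)
  apply (simp add: gt2_eq_iff field_simps)
  done

lemma qR_eq: "qR w = gt2 (1/2) (1/2) (-1/2) (1/2)"
  unfolding qR_def Phi_gt3
  apply (simp add: hmult_mk halpha_def hbeta_def)
  apply (simp add: gt2_eq_iff field_simps)
  done

lemma UE_eq: "UE w = gt2 0 0 1 0"
  unfolding UE_def finvE_eq qR_eq
  apply (simp add: hmult_mk)
  done

lemma VE_eq: "VE w = gt2 1 0 0 0"
  unfolding VE_def fE_eq pR_eq
  apply (simp add: hmult_mk)
  done

definition Lfun :: "'k::field H1 \<Rightarrow> 'k H2 \<Rightarrow> 'k H1" where
  "Lfun l T = sum2 T (\<lambda>h1 h2. sc (ev l h2) (hmult h1 G1))"

lemma Lfun_add [simp]: "Lfun l (S + T) = Lfun l S + Lfun l T" by (simp add: Lfun_def sum2_add)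
lemma Lfun_diff [simp]: "Lfun l (S - T) = Lfun l S - Lfun l T" by (simp add: Lfun_def sum2_diff)
lemma Lfun_sc [simp]: "Lfun l (sc c T) = sc c (Lfun l T)" by (simp add: Lfun_def sum2_sc)
lemma num_sc: "numeral k * (T::'a \<Rightarrow> 'k::field) = sc (numeral k) T" by (rule ext) (simp add: sc_apply)
lemma uminus_sc: "- (T::'a \<Rightarrow> 'k::field) = sc (-1) T" by (rule ext) (simp add: sc_apply)
lemma Lfun_num [simp]: "Lfun l (numeral k * T) = sc (numeral k) (Lfun l T)" by (simp add: num_sc)
lemma Lfun_uminus [simp]: "Lfun l (- T) = sc (-1) (Lfun l T)" by (simp add: uminus_sc)

lemma ev_mk [simp]: "ev l (mk a0 a1 a2 a3 b0 b1 b2 b3) = l(0,0)*a0 + l(0,1)*a1 + l(0,2)*a2 + l(0,3)*a3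
   + l(1,0)*b0 + l(1,1)*b1 + l(1,2)*b2 + l(1,3)*b3"
  by (simp add: ev_def sum_Bset)

lemma Lfun_tens_mk [simp]: "Lfun l (tens (mk a0 a1 a2 a3 b0 b1 b2 b3) (mk c0 c1 c2 c3 d0 d1 d2 d3)) =
   sc (ev l (mk c0 c1 c2 c3 d0 d1 d2 d3)) (hmult (mk a0 a1 a2 a3 b0 b1 b2 b3) G1)"
  apply (simp add: Lfun_def sum2_def Bset_eq hmult_mk)
  apply (simp add: mk_eq_iff algebra_simps)
  done

definition ch :: "'k::field" where "ch = 1/2"
lemma pp_ch: "pplus = mk ch 0 0 0 ch 0 0 0" "pminus = mk ch 0 0 0 (-ch) 0 0 0"
  by (simp_all add: ch_def pplus_def pminus_def)

lemma hmult2_num_left: "hmult2 (numeral k * (S::'k H2)) T = sc (numeral k) (hmult2 S T)"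
  by (simp add: num_sc hmult2_sc_left)
lemma hmult2_num_right: "hmult2 (S::'k H2) (numeral k * T) = sc (numeral k) (hmult2 S T)"
  by (simp add: num_sc hmult2_sc_right)
lemma hmult2_uminus_left: "hmult2 (- (S::'k H2)) T = sc (-1) (hmult2 S T)"
  by (simp add: uminus_sc hmult2_sc_left)
lemma hmult2_uminus_right: "hmult2 (S::'k H2) (- T) = sc (-1) (hmult2 S T)"
  by (simp add: uminus_sc hmult2_sc_right)

lemma Delta_bas_mk:
  "Delta w (mk 0 1 0 0 0 0 0 0) = hmult2 (hpow2 Dg 0) (hpow2 (Dx w) 1)"
  "Delta w (mk 0 0 1 0 0 0 0 0) = hmult2 (hpow2 Dg 0) (hpow2 (Dx w) 2)"
  "Delta w (mk 0 0 0 1 0 0 0 0) = hmult2 (hpow2 Dg 0) (hpow2 (Dx w) 3)"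
  "Delta w (mk 0 0 0 0 0 1 0 0) = hmult2 (hpow2 Dg 1) (hpow2 (Dx w) 1)"
  "Delta w (mk 0 0 0 0 0 0 1 0) = hmult2 (hpow2 Dg 1) (hpow2 (Dx w) 2)"
  "Delta w (mk 0 0 0 0 0 0 0 1) = hmult2 (hpow2 Dg 1) (hpow2 (Dx w) 3)"
  using Delta_bas[of "(0,1)" w] Delta_bas[of "(0,2)" w] Delta_bas[of "(0,3)" w]
    Delta_bas[of "(1,1)" w] Delta_bas[of "(1,2)" w] Delta_bas[of "(1,3)" w]
  by (simp_all only: Bset_eq bas_mk insert_iff prod.inject fst_conv snd_conv simp_thms One_nat_def[symmetric])

lemmas H2rules = hpow2_simps Dx_def hmult2_add_left hmult2_add_right hmult2_diff_left
     hmult2_diff_right hmult2_sc_left hmult2_sc_right hmult2_tens hmult_mk hone2_def pp_ch hone_def hx_def hg_def Dg_def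
     hmult2_num_left hmult2_num_right hmult2_uminus_left hmult2_uminus_right

lemma wsq: "w * w = -1" by (rule ww)
lemma ch2: "2 * ch = (1::'k)" by (simp add: ch_def)

lemma sum2_cong: "(\<And>p q. p \<in> Bset \<Longrightarrow> q \<in> Bset \<Longrightarrow> F (bas p) (bas q) = G (bas p) (bas q)) \<Longrightarrow> sum2 T F = sum2 T G"
  unfolding sum2_def by (rule sum.cong) auto

lemma LHS_eq: "sum2 (VE w) (\<lambda>v1 v2. sum2 (Delta w h) (\<lambda>h1 h2. sum2 (UE w) (\<lambda>u1 u2.
        sc (ev l (hprodl [v2, h2, u2])) (hprodl [v1, h1, u1])))) = Lfun l (Delta w h)"
  unfolding VE_eq UE_eq Lfun_def
  by (simp, rule sum2_cong, simp add: hmult_mk)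

lemma Lfun_gt2 [simp]: "Lfun l (gt2 a b c d) = sc a (sc (l(0,0)) G1) + sc b (sc (l (1,0)) G1) + sc c (sc (l(0,0)) E1) + sc d (sc (l(1,0)) E1)"
  unfolding gt2_def by (simp del: tens_g add: hmult_mk)

lemma sup_dir: "left_cointegral w (mk 0 0 0 c 0 0 0 0)"
  unfolding left_cointegral_def
proof
  fix h :: "'k H1" assume h: "h \<in> Hel"
  show "sum2 (VE w) (\<lambda>v1 v2. sum2 (Delta w h) (\<lambda>h1 h2. sum2 (UE w) (\<lambda>u1 u2.
        sc (ev (mk 0 0 0 c 0 0 0 0) (hprodl [v2, h2, u2])) (hprodl [v1, h1, u1])))) =
    sum3 Phiinv (\<lambda>x1 x2 x3. sc (ev mu x1 * ev (mk 0 0 0 c 0 0 0 0) (hmult h (Santi w x2))) x3)"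
    unfolding LHS_eq
    apply (subst Delta_lin)
    apply (subst (1 2) Hel_mk[OF h])
    apply (simp del: tens_g consts_mk add: sum_Bset Delta_bas_mk H2rules Phiinv_eq Phi_gt3 mu_def)
    apply (simp add: mk_eq_iff ch_def field_simps)
    done
qed

lemma w2: "w^2 = -1" using ww by (simp add: power2_eq_square)
lemma w3: "w^3 = -w" using ww by (simp add: power3_eq_cube)
lemma w4: "w^4 = 1" using ww by (metis power4_eq_xxxx mult.assoc mult_minus1 minus_minus mult_1 mult_minus_left)

lemma wn1: "w \<noteq> 1"
proof
  assume "w = 1"
  then have "(1::'k) = -1" using ww by simp
  then have "(2::'k) = 0" by (metis one_add_one add.right_inverse)
  then show False using two by simp
qed

lemma sub_dir: assumes l: "l \<in> Hel" and lc: "left_cointegral w l"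
  shows "l = mk 0 0 0 (l(0,3)) 0 0 0 0"
proof -
  have c: "\<And>h. h \<in> Hel \<Longrightarrow> Lfun l (Delta w h) = sum3 Phiinv (\<lambda>x1 x2 x3. sc (ev mu x1 * ev l (hmult h (Santi w x2))) x3)"
    using lc unfolding left_cointegral_def LHS_eq by blast
  have eqs: "l(0,0) = 0 \<and> l(1,0)=0 \<and> l(0,1)=0 \<and> l(0,2)=0 \<and> l(1,2)=0 \<and> l(1,3)=0 \<and> l(1,1)=0"
    using c[of "mk 1 0 0 0 0 0 0 0"] c[of "mk 0 0 0 0 1 0 0 0"] c[of "mk 0 0 0 0 0 1 0 0"] c[of "mk 0 0 1 0 0 0 0 0"]
      c[of "mk 0 0 0 0 0 0 1 0"] c[of "mk 0 0 0 1 0 0 0 0"]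
    apply (simp del: tens_g consts_mk add: Delta_bas_mk H2rules Phiinv_eq Phi_gt3 mu_def mk_eq_iff)
    apply (simp add: ch_def field_simps power2_eq_square[symmetric] w2 w3 wn1)
    done
  show ?thesis using eqs by (subst Hel_mk[OF l]) simp
qed
end


declare wnz[simp del] two'[simp del] bit0_nz[simp del] Santi_g[simp del] Sinv_g[simp del]
  hmult_E1_left[simp del] hmult_E1_right[simp del] Lfun_gt2[simp del]

theorem mainTheorem16:
  fixes i s :: "'k::field"
  assumes prim4: "i ^ 4 = 1" "i ^ 2 \<noteq> 1"
    and sign: "s = 1 \<or> s = -1"
  shows "{l \<in> Hel. left_cointegral (s * i) l} = {sc c (bas (0,3)) | c. True}"
proof -
  have "(i^2 - 1) * (i^2 + 1) = 0"
  proof -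
    have "(i^2 - 1) * (i^2 + 1) = i^4 - 1" by (simp add: algebra_simps power2_eq_square power4_eq_xxxx)
    then show ?thesis using prim4(1) by simp
  qed
  then have i2: "i^2 = -1" using prim4(2) by (simp add: eq_neg_iff_add_eq_0)
  have two: "(2::'k) \<noteq> 0"
  proof
    assume "(2::'k) = 0"
    then have "(1::'k) + 1 = 0" by simp
    then have "(1::'k) = -1" by (simp add: eq_neg_iff_add_eq_0)
    then show False using prim4(2) i2 by simp
  qed
  have ss: "s * s = 1" using sign by auto
  have ww: "(s * i) * (s * i) = -1"
  proof -
    have "(s * i) * (s * i) = (s * s) * i^2" by (simp add: power2_eq_square algebra_simps)
    then show ?thesis using ss i2 by simp
  qed
  have scb: "\<And>c. sc c (bas (0,3)) = (mk 0 0 0 c 0 0 0 0 :: 'k H1)" by simp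
  show ?thesis
  proof (rule set_eqI, rule iffI)
    fix l assume "l \<in> {l \<in> Hel. left_cointegral (s * i) l}"
    then have l: "l \<in> Hel" and lc: "left_cointegral (s * i) l" by auto
    have "l = mk 0 0 0 (l(0,3)) 0 0 0 0" by (rule sub_dir[OF two ww l lc])
    then show "l \<in> {sc c (bas (0,3)) | c. True}" using scb by auto
  next
    fix l :: "'k H1" assume "l \<in> {sc c (bas (0,3)) | c. True}"
    then obtain c where c: "l = sc c (bas (0,3))" by auto
    then have lm: "l = mk 0 0 0 c 0 0 0 0" using scb by simp
    show "l \<in> {l \<in> Hel. left_cointegral (s * i) l}"
      using sup_dir[OF two ww, of c] lm by simp
  qed
qed


end
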